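(* Let $(X,Y)$ be a pair of $n\times n$ complex matrices with $\mathrm{rank}([X,Y]-I)\le 1$, and suppose $X$ is diagonalizable. Then there are unique polynomials $p,q$ of degree at most $n$ with $p(0)=q(0)=0$ such that the pair $\Psi_q\Phi_p(X_0,Y_0)$ is simultaneously conjugate to $(X,Y)$.
   Context: $X_0=-\sum_{r=1}^{n-1} rE_{r+1,r}$, $Y_0=\sum_{r=1}^{n-1}E_{r,r+1}$ ($E_{i,j}$ the matrix unit). For a polynomial $p$, $\Phi_p(X,Y)=(X+p'(Y),Y)$ and $\Psi_q(X,Y)=(X,Y-q'(X))$. *)

theory Defs
  imports "Jordan_Normal_Form.DL_Rank" "HOL-Computational_Algebra.Polynomial"
begin

definition poly_mat :: "complex poly \<Rightarrow> complex mat \<Rightarrow> complex mat" where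
  "poly_mat p A = foldr (\<lambda>c M. c \<cdot>\<^sub>m 1\<^sub>m (dim_row A) + A * M) (coeffs p) (0\<^sub>m (dim_row A) (dim_row A))"

(* X_0 = - sum_{r=1}^{n-1} r E_{r+1,r}  (0-based indices: entry (r, r-1) = -r) *)
definition X0 :: "nat \<Rightarrow> complex mat" where
  "X0 n = mat n n (\<lambda>(i,j). if i = j + 1 then - of_nat i else 0)"

(* Y_0 = sum_{r=1}^{n-1} E_{r,r+1}  (0-based indices: entry (r-1, r) = 1) *)
definition Y0 :: "nat \<Rightarrow> complex mat" where
  "Y0 n = mat n n (\<lambda>(i,j). if j = i + 1 then 1 else 0)"

definition Phi :: "complex poly \<Rightarrow> complex mat \<times> complex mat \<Rightarrow> complex mat \<times> complex mat" where
  "Phi p XY = (fst XY + poly_mat (pderiv p) (snd XY), snd XY)"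

definition Psi :: "complex poly \<Rightarrow> complex mat \<times> complex mat \<Rightarrow> complex mat \<times> complex mat" where
  "Psi q XY = (fst XY, snd XY - poly_mat (pderiv q) (fst XY))"

definition sim_conj :: "nat \<Rightarrow> complex mat \<times> complex mat \<Rightarrow> complex mat \<times> complex mat \<Rightarrow> bool" where
  "sim_conj n AB XY = (\<exists>P Q. P \<in> carrier_mat n n \<and> Q \<in> carrier_mat n n \<and>
      P * Q = 1\<^sub>m n \<and> Q * P = 1\<^sub>m n \<and>
      fst XY = P * fst AB * Q \<and> snd XY = P * snd AB * Q)"

definition diagonalizable :: "complex mat \<Rightarrow> bool" where
  "diagonalizable A = (\<exists>D. diagonal_mat D \<and> similar_mat A D)"

end

theory Submission
  imports Defs Jordan_Normal_Form.DL_Rank_Submatrix "HOL-Computational_Algebra.Polynomial_FPS"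
begin


lemma det1: "B \<in> carrier_mat 1 1 \<Longrightarrow> det (B::complex mat) = B$$(0,0)"
  by (subst det_upper_triangular[of B 1]) (auto simp: diag_mat_def)
lemma det2: "A \<in> carrier_mat 2 2 \<Longrightarrow> det (A::complex mat) = A$$(0,0)*A$$(1,1) - A$$(0,1)*A$$(1,0)"
  apply (subst laplace_expansion_row[where i=0], assumption, simp)
  apply (simp add: cofactor_def numeral_2_eq_2)
  apply (subst det1, force simp: mat_delete_def)+
  apply (auto simp: mat_delete_def)
  done

lemma pick2: assumes "(i::nat) < k" shows "pick {i,k} 0 = i" "pick {i,k} (Suc 0) = k"
proof -
  show a: "pick {i,k} 0 = i" using assms by (simp, intro Least_equality) auto
  show "pick {i,k} (Suc 0) = k" using assms a by (simp, intro Least_equality) auto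
qed

lemma card2: assumes "(i::nat) < k" "k < n" shows "card {a. a < n \<and> a \<in> {i,k}} = 2"
proof -
  have "{a. a < n \<and> a \<in> {i,k}} = {i,k}" using assms by auto
  thus ?thesis using assms by simp
qed

lemma minor_ordered:
  assumes A: "A \<in> carrier_mat n n" and r: "vec_space.rank n (A::complex mat) \<le> 1"
    and "i < k" "k < n" "j < l" "l < n"
  shows "A$$(i,j) * A$$(k,l) = A$$(i,l) * A$$(k,j)"
proof (rule ccontr)
  assume ne: "A$$(i,j) * A$$(k,l) \<noteq> A$$(i,l) * A$$(k,j)"
  define Sm where "Sm = submatrix A {i,k} {j,l}"
  have S: "Sm \<in> carrier_mat 2 2" using A card2[of i k n] card2[of j l n] assms
    by (auto simp: submatrix_def Sm_def)
  have e: "Sm $$ (a,b) = A $$ (pick {i,k} a, pick {j,l} b)" if "a < 2" "b < 2" for a b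
    unfolding Sm_def using that card2[of i k n] card2[of j l n] assms A by (intro submatrix_index) auto
  have "det Sm \<noteq> 0" using ne
    by (simp add: det2[OF S] e pick2 assms del: pick.simps)
  from vec_space.rank_gt_minor[OF A this[unfolded Sm_def]] have "2 \<le> vec_space.rank n A"
    using card2[of j l n] assms by simp
  with r show False by simp
qed

lemma rank1_minor:
  assumes A: "A \<in> carrier_mat n n" and r: "vec_space.rank n (A::complex mat) \<le> 1"
    and "i < n" "k < n" "j < n" "l < n"
  shows "A$$(i,j) * A$$(k,l) = A$$(i,l) * A$$(k,j)"
proof -
  have sym: "A$$(i,j) * A$$(k,l) = A$$(i,l) * A$$(k,j)" if "i < k" "i<n" "k<n" "j<n" "l<n" for i k j l
  proof -
    consider "j < l" | "j = l" | "l < j" by linarith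
    then show ?thesis
    proof cases
      case 1 then show ?thesis using minor_ordered[OF A r] that by auto
    next
      case 2 then show ?thesis by simp
    next
      case 3 then show ?thesis using minor_ordered[OF A r, of i k l j] that by (simp add: mult.commute)
    qed
  qed
  consider "i < k" | "i = k" | "k < i" by linarith
  then show ?thesis
  proof cases
    case 1 then show ?thesis using sym assms by auto
  next
    case 2 then show ?thesis by (simp add: mult.commute)
  next
    case 3 then show ?thesis using sym[of k i l j] assms by (simp add: mult.commute)
  qed
qed


definition dmat :: "nat \<Rightarrow> (nat \<Rightarrow> complex) \<Rightarrow> complex mat" where
  "dmat n x = mat n n (\<lambda>(i,j). if i = j then x i else 0)"

lemma dmat_carrier[simp]: "dmat n x \<in> carrier_mat n n" by (simp add: dmat_def)

lemma dmat_index[simp]: "i < n \<Longrightarrow> j < n \<Longrightarrow> dmat n x $$ (i,j) = (if i = j then x i else 0)"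
  by (simp add: dmat_def)

lemma dmat_dim[simp]: "dim_row (dmat n x) = n" "dim_col (dmat n x) = n"
  by (auto simp: dmat_def)

lemma dmat_mult: "dmat n x * dmat n y = dmat n (\<lambda>i. x i * y i)"
proof (rule eq_matI)
  fix i j assume ij: "i < dim_row (dmat n (\<lambda>i. x i * y i))" "j < dim_col (dmat n (\<lambda>i. x i * y i))"
  have "(\<Sum>k = 0..<n. (if i = k then x i else 0) * (if k = j then y k else 0)) = (\<Sum>k = 0..<n. if k = j then (if i = j then x i * y j else 0) else 0)"
    by (rule sum.cong) auto
  then show "(dmat n x * dmat n y) $$ (i, j) = dmat n (\<lambda>i. x i * y i) $$ (i, j)"
    using ij by (simp add: scalar_prod_def)
qed auto

lemma dmat_add: "dmat n x + dmat n y = dmat n (\<lambda>i. x i + y i)"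
  by (rule eq_matI) auto

lemma dmat_smult_one: "c \<cdot>\<^sub>m 1\<^sub>m n = dmat n (\<lambda>i. c)"
  by (rule eq_matI) auto

lemma dmat_zero: "0\<^sub>m n n = dmat n (\<lambda>i. 0)"
  by (rule eq_matI) auto

lemma poly_foldr: fixes x :: complex shows "poly p x = foldr (\<lambda>c v. c + x * v) (coeffs p) 0"
proof -
  have "foldr (\<lambda>a f x. a + x * f x) cs (\<lambda>x. 0) x = foldr (\<lambda>c v. c + x * v) cs 0" for cs :: "complex list"
    by (induction cs) auto
  thus ?thesis by (simp add: poly_def horner_sum_foldr)
qed

lemma poly_mat_dmat: "poly_mat f (dmat n x) = dmat n (\<lambda>i. poly f (x i))"
proof -
  have "foldr (\<lambda>c M. c \<cdot>\<^sub>m 1\<^sub>m n + dmat n x * M) cs (0\<^sub>m n n) = dmat n (\<lambda>i. foldr (\<lambda>c v. c + x i * v) cs 0)" for cs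
    by (induction cs) (auto simp: dmat_mult dmat_add dmat_smult_one dmat_zero)
  thus ?thesis by (simp add: poly_mat_def poly_foldr dmat_def)
qed

lemma horner_conj:
  fixes B P Q :: "complex mat"
  assumes B: "B \<in> carrier_mat n n" and P: "P \<in> carrier_mat n n" and Q: "Q \<in> carrier_mat n n"
    and PQ: "P * Q = 1\<^sub>m n" and QP: "Q * P = 1\<^sub>m n"
  shows "foldr (\<lambda>c M. c \<cdot>\<^sub>m 1\<^sub>m n + (P*B*Q) * M) cs (0\<^sub>m n n) = P * foldr (\<lambda>c M. c \<cdot>\<^sub>m 1\<^sub>m n + B * M) cs (0\<^sub>m n n) * Q
       \<and> foldr (\<lambda>c M. c \<cdot>\<^sub>m 1\<^sub>m n + B * M) cs (0\<^sub>m n n) \<in> carrier_mat n n"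
proof (induction cs)
  case Nil
  then show ?case using P Q by simp
next
  case (Cons c cs)
  define M where "M = foldr (\<lambda>c M. c \<cdot>\<^sub>m 1\<^sub>m n + B * M) cs (0\<^sub>m n n)"
  have M: "M \<in> carrier_mat n n" using Cons M_def by simp
  have IH: "foldr (\<lambda>c M. c \<cdot>\<^sub>m 1\<^sub>m n + (P*B*Q) * M) cs (0\<^sub>m n n) = P * M * Q" using Cons M_def by simp
  have "c \<cdot>\<^sub>m 1\<^sub>m n + (P*B*Q) * (P * M * Q) = P * (c \<cdot>\<^sub>m 1\<^sub>m n + B * M) * Q"
  proof -
    have "(P*B*Q) * (P * M * Q) = P * (B * M) * Q"
    proof -
      have "Q * (P * (M * Q)) = (Q * P) * (M * Q)"
        using P Q M by (metis assoc_mult_mat mult_carrier_mat)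
      moreover have "1\<^sub>m n * (M * Q) = M * Q" by (rule left_mult_one_mat[of "M*Q" n n]) (use M Q in auto)
      ultimately have QPX: "Q * (P * (M * Q)) = M * Q" using QP by simp
      show ?thesis using P B Q M QPX by (simp add: assoc_mult_mat[of _ n n _ n _ n])
    qed
    moreover have "P * (c \<cdot>\<^sub>m 1\<^sub>m n + B * M) * Q = c \<cdot>\<^sub>m 1\<^sub>m n + P * (B * M) * Q"
    proof -
      have "P * (c \<cdot>\<^sub>m 1\<^sub>m n + B * M) = c \<cdot>\<^sub>m P + P * (B * M)"
        using P B M by (simp add: mult_add_distrib_mat[where nr=n and n=n and nc=n] mult_smult_distrib[where nr=n and n=n and nc=n])
      moreover have "(c \<cdot>\<^sub>m P + P * (B * M)) * Q = c \<cdot>\<^sub>m 1\<^sub>m n + P * (B * M) * Q"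
        using P B M Q PQ by (simp add: add_mult_distrib_mat[where nr=n and n=n and nc=n] mult_smult_assoc_mat[where nr=n and n=n and nc=n])
      ultimately show ?thesis by simp
    qed
    ultimately show ?thesis by simp
  qed
  then show ?case using IH M B by (simp add: M_def[symmetric])
qed

lemma poly_mat_conj:
  fixes B P Q :: "complex mat"
  assumes B: "B \<in> carrier_mat n n" and P: "P \<in> carrier_mat n n" and Q: "Q \<in> carrier_mat n n"
    and PQ: "P * Q = 1\<^sub>m n" and QP: "Q * P = 1\<^sub>m n"
  shows "poly_mat f (P*B*Q) = P * poly_mat f B * Q"
  using horner_conj[OF assms, of "coeffs f"] B P Q by (simp add: poly_mat_def)





lemma Y0_carrier[simp]: "Y0 n \<in> carrier_mat n n" by (simp add: Y0_def)
lemma X0_carrier[simp]: "X0 n \<in> carrier_mat n n" by (simp add: X0_def)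
lemma Y0_dim[simp]: "dim_row (Y0 n) = n" "dim_col (Y0 n) = n" by (simp_all add: Y0_def)
lemma X0_dim[simp]: "dim_row (X0 n) = n" "dim_col (X0 n) = n" by (simp_all add: X0_def)
lemma Y0_index: "i < n \<Longrightarrow> j < n \<Longrightarrow> Y0 n $$ (i,j) = (if j = Suc i then 1 else 0)"
  by (simp add: Y0_def)
lemma X0_index: "i < n \<Longrightarrow> j < n \<Longrightarrow> X0 n $$ (i,j) = (if i = Suc j then - of_nat i else 0)"
  by (simp add: X0_def)

lemma mult_Y0_right:
  assumes A: "A \<in> carrier_mat n n" and ij: "i < n" "j < n"
  shows "(A * Y0 n) $$ (i,j) = (if 0 < j then A $$ (i, j - 1) else 0)"
proof -
  have "(A * Y0 n) $$ (i,j) = (\<Sum>l = 0..<n. A $$ (i,l) * (if j = Suc l then 1 else 0))"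
    using A ij by (simp add: scalar_prod_def Y0_index)
  also have "\<dots> = (\<Sum>l = 0..<n. if l = j - 1 \<and> 0 < j then A $$ (i,l) else 0)"
    by (rule sum.cong) auto
  also have "\<dots> = (if 0 < j then A $$ (i, j - 1) else 0)"
    using ij by (cases "0 < j") (simp_all add: sum.delta)
  finally show ?thesis .
qed

lemma mult_Y0_left:
  assumes A: "A \<in> carrier_mat n n" and ij: "i < n" "j < n"
  shows "(Y0 n * A) $$ (i,j) = (if Suc i < n then A $$ (Suc i, j) else 0)"
proof -
  have "(Y0 n * A) $$ (i,j) = (\<Sum>l = 0..<n. (if l = Suc i then 1 else 0) * A $$ (l,j))"
    using A ij by (simp add: scalar_prod_def Y0_index)
  also have "\<dots> = (\<Sum>l = 0..<n. if l = Suc i then A $$ (l,j) else 0)"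
    by (rule sum.cong) auto
  also have "\<dots> = (if Suc i < n then A $$ (Suc i, j) else 0)"
    by (simp add: sum.delta)
  finally show ?thesis .
qed

lemma aux: "(j::nat) - i = Suc x \<Longrightarrow> j - Suc i = x" by arith

lemma poly_mat_Y0:
  assumes ij: "i < n" "j < n"
  shows "poly_mat f (Y0 n) $$ (i,j) = (if i \<le> j then coeff f (j - i) else 0)"
proof -
  have "(\<forall>i<n. \<forall>j<n. foldr (\<lambda>c M. c \<cdot>\<^sub>m 1\<^sub>m n + Y0 n * M) cs (0\<^sub>m n n) $$ (i,j)
          = (if i \<le> j then nth_default 0 cs (j - i) else 0))
        \<and> foldr (\<lambda>c M. c \<cdot>\<^sub>m 1\<^sub>m n + Y0 n * M) cs (0\<^sub>m n n) \<in> carrier_mat n n" for cs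
  proof (induction cs)
    case Nil
    then show ?case by simp
  next
    case (Cons c cs)
    define M where "M = foldr (\<lambda>c M. c \<cdot>\<^sub>m 1\<^sub>m n + Y0 n * M) cs (0\<^sub>m n n)"
    have M: "M \<in> carrier_mat n n" and Me: "\<And>i j. i < n \<Longrightarrow> j < n \<Longrightarrow> M $$ (i,j) = (if i \<le> j then nth_default 0 cs (j - i) else 0)"
      using Cons M_def by auto
    show ?case
    proof (intro allI impI conjI)
      fix i j assume ij: "i < n" "j < n"
      have "(c \<cdot>\<^sub>m 1\<^sub>m n + Y0 n * M) $$ (i,j) = (if i = j then c else 0) + (if Suc i < n then M $$ (Suc i, j) else 0)"
        using ij M by (simp add: mult_Y0_left del: index_mult_mat(1))
      also have "\<dots> = (if i \<le> j then nth_default 0 (c # cs) (j - i) else 0)"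
        using ij by (auto simp: Me nth_default_Cons split: nat.splits dest: aux)
      finally show "foldr (\<lambda>c M. c \<cdot>\<^sub>m 1\<^sub>m n + Y0 n * M) (c # cs) (0\<^sub>m n n) $$ (i, j) = (if i \<le> j then nth_default 0 (c # cs) (j - i) else 0)"
        by (simp add: M_def)
    next
      show "foldr (\<lambda>c M. c \<cdot>\<^sub>m 1\<^sub>m n + Y0 n * M) (c # cs) (0\<^sub>m n n) \<in> carrier_mat n n"
        using M by (simp add: M_def[symmetric]) (metis add_carrier_mat mult_carrier_mat Y0_carrier smult_carrier_mat one_carrier_mat)
    qed
  qed
  then show ?thesis using ij by (simp add: poly_mat_def nth_default_coeffs_eq)
qed

lemma poly_mat_carrier: "A \<in> carrier_mat n n \<Longrightarrow> poly_mat f A \<in> carrier_mat n n"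
proof -
  assume A: "A \<in> carrier_mat n n"
  have "foldr (\<lambda>c M. c \<cdot>\<^sub>m 1\<^sub>m n + A * M) cs (0\<^sub>m n n) \<in> carrier_mat n n" for cs
    by (induction cs) (use A in auto)
  thus ?thesis using A by (simp add: poly_mat_def)
qed

definition Xp :: "nat \<Rightarrow> complex poly \<Rightarrow> complex mat" where
  "Xp n p = X0 n + poly_mat (pderiv p) (Y0 n)"

lemma Xp_carrier[simp]: "Xp n p \<in> carrier_mat n n"
  by (simp add: Xp_def poly_mat_carrier)

lemma Xp_dim[simp]: "dim_row (Xp n p) = n" "dim_col (Xp n p) = n"
  using carrier_matD[OF Xp_carrier[of n p]] by auto

lemma Xp_index: "i < n \<Longrightarrow> j < n \<Longrightarrow> Xp n p $$ (i,j) =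
   (if i = Suc j then - of_nat i else 0) + (if i \<le> j then coeff (pderiv p) (j - i) else 0)"
  using poly_mat_carrier[OF Y0_carrier, of "pderiv p" n]
  by (simp add: Xp_def X0_index poly_mat_Y0)

lemma Xp_comm:
  assumes ij: "i < n" "j < n"
  shows "(Xp n p * Y0 n - Y0 n * Xp n p - 1\<^sub>m n) $$ (i,j) = (if i = n - 1 \<and> j = n - 1 then - of_nat n else 0)"
proof -
  have "(Xp n p * Y0 n - Y0 n * Xp n p - 1\<^sub>m n) $$ (i,j) =
     (if 0 < j then Xp n p $$ (i, j - 1) else 0) - (if Suc i < n then Xp n p $$ (Suc i, j) else 0) - (if i = j then 1 else 0)"
    using ij by (simp add: mult_Y0_left mult_Y0_right del: index_mult_mat(1))
  also have "\<dots> = (if i = n - 1 \<and> j = n - 1 then - of_nat n else 0)"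
    using ij by (auto simp: Xp_index of_nat_diff)
  finally show ?thesis .
qed



definition Ef :: "complex poly \<Rightarrow> complex fps" where
  "Ef p = fps_exp 1 oo fps_of_poly p"

definition Gf :: "complex poly \<Rightarrow> complex \<Rightarrow> complex fps" where
  "Gf p l = Ef p * fps_exp (- l)"

lemma Ef0: "coeff p 0 = 0 \<Longrightarrow> fps_nth (Ef p) 0 = 1"
  by (simp add: Ef_def fps_compose_nth)

lemma Ef_deriv: "coeff p 0 = 0 \<Longrightarrow> fps_deriv (Ef p) = Ef p * fps_of_poly (pderiv p)"
  by (simp add: Ef_def fps_compose_deriv fps_of_poly_pderiv)

lemma Gf0: "coeff p 0 = 0 \<Longrightarrow> fps_nth (Gf p l) 0 = 1"
  by (simp add: Gf_def Ef0)

lemma Gf_deriv: "coeff p 0 = 0 \<Longrightarrow> fps_deriv (Gf p l) = Gf p l * (fps_of_poly (pderiv p) - fps_const l)"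
proof -
  assume a: "coeff p 0 = 0"
  have h: "fps_const (-l) = - fps_const l" by simp
  show ?thesis unfolding Gf_def fps_deriv_mult Ef_deriv[OF a] fps_exp_deriv h
    by (simp add: algebra_simps del: fps_const_neg)
qed

lemma Gf_rec:
  assumes "coeff p 0 = 0"
  shows "of_nat (Suc j) * fps_nth (Gf p l) (Suc j) = (\<Sum>i\<le>j. fps_nth (Gf p l) i * coeff (pderiv p) (j - i)) - l * fps_nth (Gf p l) j"
proof -
  have "of_nat (Suc j) * fps_nth (Gf p l) (Suc j) = fps_nth (fps_deriv (Gf p l)) j" by simp
  also have "\<dots> = (\<Sum>i=0..j. fps_nth (Gf p l) i * (coeff (pderiv p) (j - i) - (if j - i = 0 then l else 0)))"
    by (simp add: Gf_deriv[OF assms] fps_mult_nth)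
  also have "\<dots> = (\<Sum>i=0..j. fps_nth (Gf p l) i * coeff (pderiv p) (j - i)) - (\<Sum>i=0..j. if i = j then fps_nth (Gf p l) i * l else 0)"
    by (subst sum_subtractf[symmetric]) (rule sum.cong, simp_all add: right_diff_distrib)
  also have "\<dots> = (\<Sum>i\<le>j. fps_nth (Gf p l) i * coeff (pderiv p) (j - i)) - l * fps_nth (Gf p l) j"
    by (simp add: atLeast0AtMost sum.delta')
  finally show ?thesis .
qed

lemma Gf_nth: "fps_nth (Gf p l) m = (\<Sum>i=0..m. fps_nth (Ef p) i * (- l) ^ (m - i) / fact (m - i))"
  by (simp add: Gf_def fps_mult_nth)

definition hpoly :: "nat \<Rightarrow> complex poly \<Rightarrow> complex poly" where
  "hpoly m p = (\<Sum>k\<le>m. monom (fps_nth (Ef p) (m - k) * (-1) ^ k / fact k) k)"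

lemma neg_pow: "(- (l::complex)) ^ k = (-1) ^ k * l ^ k"
  by (subst power_mult_distrib[symmetric]) simp

lemma poly_hpoly: "poly (hpoly m p) l = fps_nth (Gf p l) m"
proof -
  have "poly (hpoly m p) l = (\<Sum>k\<le>m. fps_nth (Ef p) (m - k) * (-1) ^ k / fact k * l ^ k)"
    by (simp add: hpoly_def poly_sum poly_monom)
  also have "\<dots> = (\<Sum>i=0..m. fps_nth (Ef p) (m - (m - i)) * (-1) ^ (m - i) / fact (m - i) * l ^ (m - i))"
    by (rule sum.reindex_bij_witness[of _ "\<lambda>k. m - k" "\<lambda>k. m - k"]) auto
  also have "\<dots> = (\<Sum>i=0..m. fps_nth (Ef p) i * (- l) ^ (m - i) / fact (m - i))"
    by (rule sum.cong) (simp_all add: neg_pow[of l])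
  finally show ?thesis by (simp add: Gf_nth)
qed

lemma coeff_hpoly: "coeff (hpoly m p) k = (if k \<le> m then fps_nth (Ef p) (m - k) * (-1) ^ k / fact k else 0)"
  by (simp add: hpoly_def coeff_sum sum.delta)

lemma degree_hpoly: "degree (hpoly m p) \<le> m"
  unfolding hpoly_def by (rule degree_sum_le) (auto intro: order.trans[OF degree_monom_le])





lemma col_sum:
  assumes j: "j < n"
  shows "(\<Sum>i<n. w i * Xp n p $$ (i,j)) =
    (if Suc j < n then - of_nat (Suc j) * w (Suc j) else 0) + (\<Sum>i\<le>j. w i * coeff (pderiv p) (j - i))"
proof -
  have "(\<Sum>i<n. w i * Xp n p $$ (i,j)) = (\<Sum>i<n. (if i = Suc j then - of_nat (Suc j) * w (Suc j) else 0))
       + (\<Sum>i<n. (if i \<in> {..j} then w i * coeff (pderiv p) (j - i) else 0))"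
    by (subst sum.distrib[symmetric], rule sum.cong) (use j in \<open>auto simp: Xp_index algebra_simps\<close>)
  also have "(\<Sum>i<n. (if i = Suc j then - of_nat (Suc j) * w (Suc j) else 0)) = (if Suc j < n then - of_nat (Suc j) * w (Suc j) else 0)"
    by (simp add: sum.delta)
  also have "(\<Sum>i<n. (if i \<in> {..j} then w i * coeff (pderiv p) (j - i) else 0)) = (\<Sum>i\<in>{..<n} \<inter> {..j}. w i * coeff (pderiv p) (j - i))"
    by (simp add: sum.inter_restrict)
  also have "{..<n} \<inter> {..j} = {..j}" using j by auto
  finally show ?thesis .
qed

lemma Gf_left_eig:
  assumes p0: "coeff p 0 = 0" and j: "j < n"
  shows "(\<Sum>i<n. fps_nth (Gf p l) i * Xp n p $$ (i,j)) = l * fps_nth (Gf p l) j + (if Suc j = n then of_nat n * fps_nth (Gf p l) n else 0)"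
proof -
  have r: "(\<Sum>i\<le>j. fps_nth (Gf p l) i * coeff (pderiv p) (j - i)) = of_nat (Suc j) * fps_nth (Gf p l) (Suc j) + l * fps_nth (Gf p l) j"
    using Gf_rec[OF p0, of j l] by simp
  show ?thesis
  proof (cases "Suc j < n")
    case True
    then show ?thesis using j by (simp add: col_sum r algebra_simps)
  next
    case False
    hence n: "n = Suc j" using j by simp
    have c: "(\<Sum>i<n. fps_nth (Gf p l) i * Xp n p $$ (i,j)) = (\<Sum>i\<le>j. fps_nth (Gf p l) i * coeff (pderiv p) (j - i))"
      using col_sum[OF j, of "fps_nth (Gf p l)" p] False by simp
    show ?thesis unfolding c r using n by (simp add: algebra_simps)
  qed
qed

definition Wm :: "nat \<Rightarrow> complex poly \<Rightarrow> (nat \<Rightarrow> complex) \<Rightarrow> complex mat" where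
  "Wm n p x = mat n n (\<lambda>(k,j). fps_nth (Gf p (x k)) j)"

lemma Wm_carrier[simp]: "Wm n p x \<in> carrier_mat n n" by (simp add: Wm_def)
lemma Wm_dim[simp]: "dim_row (Wm n p x) = n" "dim_col (Wm n p x) = n" by (simp_all add: Wm_def)

lemma dmat_mult_left:
  assumes A: "A \<in> carrier_mat n n" and ij: "i < n" "j < n"
  shows "(dmat n x * A) $$ (i,j) = x i * A $$ (i,j)"
proof -
  have "(dmat n x * A) $$ (i,j) = (\<Sum>k = 0..<n. (if i = k then x i else 0) * A $$ (k,j))"
    using A ij by (simp add: scalar_prod_def)
  also have "\<dots> = (\<Sum>k = 0..<n. if i = k then x i * A $$ (k,j) else 0)"
    by (rule sum.cong) auto
  finally show ?thesis using ij by simp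
qed

lemma dmat_mult_right:
  assumes A: "A \<in> carrier_mat n n" and ij: "i < n" "j < n"
  shows "(A * dmat n x) $$ (i,j) = A $$ (i,j) * x j"
proof -
  have "(A * dmat n x) $$ (i,j) = (\<Sum>k = 0..<n. A $$ (i,k) * (if k = j then x k else 0))"
    using A ij by (simp add: scalar_prod_def)
  also have "\<dots> = (\<Sum>k = 0..<n. if k = j then A $$ (i,k) * x k else 0)"
    by (rule sum.cong) auto
  finally show ?thesis using ij by simp
qed

lemma Wm_eig:
  assumes p0: "coeff p 0 = 0" and roots: "\<And>k. k < n \<Longrightarrow> fps_nth (Gf p (x k)) n = 0"
  shows "Wm n p x * Xp n p = dmat n x * Wm n p x"
proof (rule eq_matI)
  fix k j assume kj: "k < dim_row (dmat n x * Wm n p x)" "j < dim_col (dmat n x * Wm n p x)"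
  hence kj: "k < n" "j < n" by auto
  have "(Wm n p x * Xp n p) $$ (k,j) = (\<Sum>i<n. fps_nth (Gf p (x k)) i * Xp n p $$ (i,j))"
    using kj by (simp add: scalar_prod_def Wm_def atLeast0LessThan)
  also have "\<dots> = x k * fps_nth (Gf p (x k)) j"
    using Gf_left_eig[OF p0 kj(2), of "x k"] roots[OF kj(1)] by simp
  also have "\<dots> = (dmat n x * Wm n p x) $$ (k,j)"
    by (subst dmat_mult_left[OF Wm_carrier kj]) (use kj in \<open>simp add: Wm_def\<close>)
  finally show "(Wm n p x * Xp n p) $$ (k,j) = (dmat n x * Wm n p x) $$ (k,j)" .
qed auto

lemma left_eig_root:
  assumes p0: "coeff p 0 = 0" and n: "0 < n"
    and eq: "\<And>j. j < n \<Longrightarrow> (\<Sum>i<n. w i * Xp n p $$ (i,j)) = l * w j"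
    and nz: "j0 < n" "w j0 \<noteq> 0"
  shows "fps_nth (Gf p l) n = 0"
proof -
  let ?G = "fps_nth (Gf p l)"
  define c0 where "c0 = w 0"
  have r: "(\<Sum>i\<le>j. ?G i * coeff (pderiv p) (j - i)) = of_nat (Suc j) * ?G (Suc j) + l * ?G j" for j
    using Gf_rec[OF p0, of j l] by simp
  have claim: "\<forall>i\<le>m. m < n \<longrightarrow> w i = c0 * ?G i" for m
  proof (induction m)
    case 0
    then show ?case using Gf0[OF p0] by (simp add: c0_def)
  next
    case (Suc m)
    show ?case
    proof (intro allI impI)
      fix i assume i: "i \<le> Suc m" and m: "Suc m < n"
      have IH: "\<And>i. i \<le> m \<Longrightarrow> w i = c0 * ?G i" using Suc.IH m by auto
      show "w i = c0 * ?G i"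
      proof (cases "i \<le> m")
        case True then show ?thesis using IH by blast
      next
        case False
        hence i: "i = Suc m" using i by simp
        have "(\<Sum>i\<le>m. w i * coeff (pderiv p) (m - i)) = c0 * (\<Sum>i\<le>m. ?G i * coeff (pderiv p) (m - i))"
          by (simp add: sum_distrib_left IH mult.assoc)
        also have "\<dots> = c0 * (of_nat (Suc m) * ?G (Suc m) + l * ?G m)" by (simp add: r)
        finally have s: "(\<Sum>i\<le>m. w i * coeff (pderiv p) (m - i)) = c0 * (of_nat (Suc m) * ?G (Suc m) + l * ?G m)" .
        have "l * w m = - of_nat (Suc m) * w (Suc m) + c0 * (of_nat (Suc m) * ?G (Suc m) + l * ?G m)"
          using eq[of m] m col_sum[of m n w p] s by simp
        hence "of_nat (Suc m) * w (Suc m) = of_nat (Suc m) * (c0 * ?G (Suc m))"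
          using IH[of m] by (simp add: algebra_simps)
        hence "w (Suc m) = c0 * ?G (Suc m)"
          by (simp only: mult_cancel_left of_nat_eq_0_iff) simp
        thus ?thesis using i by simp
      qed
    qed
  qed
  hence W: "\<And>i. i < n \<Longrightarrow> w i = c0 * ?G i" by auto
  have w0: "c0 \<noteq> 0"
  proof
    assume "c0 = 0"
    then have "w j0 = 0" using W[OF nz(1)] by simp
    with nz show False by simp
  qed
  define m where "m = n - 1"
  have nm: "n = Suc m" using n m_def by simp
  have "(\<Sum>i\<le>m. w i * coeff (pderiv p) (m - i)) = c0 * (\<Sum>i\<le>m. ?G i * coeff (pderiv p) (m - i))"
    using W nm by (simp add: sum_distrib_left mult.assoc)
  also have "\<dots> = c0 * (of_nat n * ?G n + l * ?G m)" by (simp add: r nm)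
  finally have s: "(\<Sum>i\<le>m. w i * coeff (pderiv p) (m - i)) = c0 * (of_nat n * ?G n + l * ?G m)" .
  have "l * w m = c0 * (of_nat n * ?G n + l * ?G m)"
    using eq[of m] col_sum[of m n w p] s nm by simp
  hence "c0 * (of_nat n * ?G n) = 0" using W[of m] nm by (simp add: algebra_simps)
  thus ?thesis using w0 n by simp
qed



lemma Ef_rec:
  assumes "coeff p 0 = 0"
  shows "of_nat (Suc m) * fps_nth (Ef p) (Suc m) = (\<Sum>i=0..m. fps_nth (Ef p) i * coeff (pderiv p) (m - i))"
proof -
  have "of_nat (Suc m) * fps_nth (Ef p) (Suc m) = fps_nth (fps_deriv (Ef p)) m" by simp
  also have "\<dots> = (\<Sum>i=0..m. fps_nth (Ef p) i * coeff (pderiv p) (m - i))"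
    by (simp add: Ef_deriv[OF assms] fps_mult_nth)
  finally show ?thesis .
qed

lemma card_img: "inj_on x {..<n} \<Longrightarrow> card (x ` {..<n}) = n"
  by (simp add: card_image)

lemma p_unique:
  assumes d1: "degree p1 \<le> n" and d2: "degree p2 \<le> n"
    and c1: "coeff p1 0 = 0" and c2: "coeff p2 0 = 0"
    and inj: "inj_on x {..<n}"
    and r1: "\<And>k. k < n \<Longrightarrow> fps_nth (Gf p1 (x k)) n = 0"
    and r2: "\<And>k. k < n \<Longrightarrow> fps_nth (Gf p2 (x k)) n = 0"
  shows "p1 = p2"
proof -
  have h: "hpoly n p1 = hpoly n p2"
  proof (rule poly_eqI_degree_lead_coeff[of _ n _ "x ` {..<n}"])
    show "coeff (hpoly n p1) n = coeff (hpoly n p2) n"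
      by (simp add: coeff_hpoly Ef0 c1 c2)
    show "n \<le> card (x ` {..<n})" using card_img[OF inj] by simp
    show "degree (hpoly n p1) \<le> n" "degree (hpoly n p2) \<le> n" by (rule degree_hpoly)+
    show "poly (hpoly n p1) z = poly (hpoly n p2) z" if "z \<in> x ` {..<n}" for z
      using that r1 r2 by (auto simp: poly_hpoly)
  qed
  have E: "fps_nth (Ef p1) i = fps_nth (Ef p2) i" if i: "i \<le> n" for i
  proof -
    have "coeff (hpoly n p1) (n - i) = coeff (hpoly n p2) (n - i)" using h by simp
    hence "fps_nth (Ef p1) i * (-1) ^ (n - i) / fact (n - i) = fps_nth (Ef p2) i * (-1) ^ (n - i) / fact (n - i)"
      using i by (simp add: coeff_hpoly)
    thus ?thesis by simp
  qed
  have claim: "\<forall>k\<le>Suc m. m < n \<longrightarrow> coeff p1 k = coeff p2 k" for m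
  proof (induction m)
    case 0
    show ?case
    proof (intro allI impI)
      fix k assume k: "k \<le> Suc 0" and n: "0 < n"
      show "coeff p1 k = coeff p2 k"
      proof (cases "k = 0")
        case True then show ?thesis using c1 c2 by simp
      next
        case False
        hence k1: "k = 1" using k by simp
        have "of_nat 1 * fps_nth (Ef p1) 1 = of_nat 1 * fps_nth (Ef p2) 1" using E[of 1] n by simp
        hence "(\<Sum>i=0..0. fps_nth (Ef p1) i * coeff (pderiv p1) (0 - i)) = (\<Sum>i=0..0. fps_nth (Ef p2) i * coeff (pderiv p2) (0 - i))"
          using Ef_rec[OF c1, of 0] Ef_rec[OF c2, of 0] by simp
        thus ?thesis using k1 Ef0[OF c1] Ef0[OF c2] by (simp add: coeff_pderiv)
      qed
    qed
  next
    case (Suc m)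
    show ?case
    proof (intro allI impI)
      fix k assume k: "k \<le> Suc (Suc m)" and n: "Suc m < n"
      have IH: "\<And>k. k \<le> Suc m \<Longrightarrow> coeff p1 k = coeff p2 k" using Suc.IH n by auto
      show "coeff p1 k = coeff p2 k"
      proof (cases "k \<le> Suc m")
        case True then show ?thesis using IH by blast
      next
        case False
        hence kk: "k = Suc (Suc m)" using k by simp
        let ?S1 = "\<Sum>i=Suc 0..Suc m. fps_nth (Ef p1) i * coeff (pderiv p1) (Suc m - i)"
        let ?S2 = "\<Sum>i=Suc 0..Suc m. fps_nth (Ef p2) i * coeff (pderiv p2) (Suc m - i)"
        have S: "?S1 = ?S2"
        proof (rule sum.cong[OF refl])
          fix i assume i: "i \<in> {Suc 0..Suc m}"
          have "coeff p1 (Suc (Suc m - i)) = coeff p2 (Suc (Suc m - i))" using i by (intro IH) auto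
          then show "fps_nth (Ef p1) i * coeff (pderiv p1) (Suc m - i) = fps_nth (Ef p2) i * coeff (pderiv p2) (Suc m - i)"
            using E[of i] i n by (simp add: coeff_pderiv)
        qed
        have e1: "of_nat (Suc (Suc m)) * fps_nth (Ef p1) (Suc (Suc m)) = coeff (pderiv p1) (Suc m) + ?S1"
          using Ef_rec[OF c1, of "Suc m"] Ef0[OF c1] by (simp add: sum.atLeast_Suc_atMost)
        have e2: "of_nat (Suc (Suc m)) * fps_nth (Ef p2) (Suc (Suc m)) = coeff (pderiv p2) (Suc m) + ?S2"
          using Ef_rec[OF c2, of "Suc m"] Ef0[OF c2] by (simp add: sum.atLeast_Suc_atMost)
        have "coeff (pderiv p1) (Suc m) = coeff (pderiv p2) (Suc m)"
          using e1 e2 S E[of "Suc (Suc m)"] n by simp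
        moreover have nz: "(2::complex) + of_nat m \<noteq> 0"
        proof -
          have "(2::complex) + of_nat m = of_nat (Suc (Suc m))" by simp
          thus ?thesis by (simp only: of_nat_eq_0_iff)
        qed
        ultimately show ?thesis using kk by (auto simp: coeff_pderiv)
      qed
    qed
  qed
  show ?thesis
  proof (rule poly_eqI)
    fix k
    show "coeff p1 k = coeff p2 k"
    proof (cases "k \<le> n")
      case True
      show ?thesis
      proof (cases k)
        case 0 then show ?thesis using c1 c2 by simp
      next
        case (Suc k')
        then show ?thesis using claim[of k'] True by auto
      qed
    next
      case False
      then show ?thesis using d1 d2 by (simp add: coeff_eq_0)
    qed
  qed
qed





lemma fps_ode_unique:
  fixes A B R1 R2 :: "complex fps"
  assumes dA: "fps_deriv A = A * R1" and dB: "fps_deriv B = B * R2"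
    and a0: "fps_nth A 0 = fps_nth B 0" and R: "\<And>k. k < m \<Longrightarrow> fps_nth R1 k = fps_nth R2 k"
  shows "\<forall>j\<le>i. i \<le> m \<longrightarrow> fps_nth A j = fps_nth B j"
proof (induction i)
  case 0
  then show ?case using a0 by simp
next
  case (Suc i)
  show ?case
  proof (intro allI impI)
    fix j assume j: "j \<le> Suc i" and m: "Suc i \<le> m"
    have IH: "\<And>j. j \<le> i \<Longrightarrow> fps_nth A j = fps_nth B j" using Suc.IH m by auto
    show "fps_nth A j = fps_nth B j"
    proof (cases "j \<le> i")
      case True then show ?thesis using IH by blast
    next
      case False
      hence jj: "j = Suc i" using j by simp
      have "of_nat (Suc i) * fps_nth A (Suc i) = fps_nth (fps_deriv A) i" by simp
      also have "\<dots> = (\<Sum>k=0..i. fps_nth A k * fps_nth R1 (i - k))" by (simp add: dA fps_mult_nth)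
      also have "\<dots> = (\<Sum>k=0..i. fps_nth B k * fps_nth R2 (i - k))"
        by (rule sum.cong[OF refl]) (use IH R m in auto)
      also have "\<dots> = fps_nth (fps_deriv B) i" by (simp add: dB fps_mult_nth)
      also have "\<dots> = of_nat (Suc i) * fps_nth B (Suc i)" by simp
      finally have "of_nat (Suc i) * fps_nth A (Suc i) = of_nat (Suc i) * fps_nth B (Suc i)" .
      hence "fps_nth A (Suc i) = fps_nth B (Suc i)" by (simp only: mult_cancel_left of_nat_eq_0_iff) simp
      thus ?thesis using jj by simp
    qed
  qed
qed

lemma p_exists:
  fixes x :: "nat \<Rightarrow> complex"
  shows "\<exists>p. degree p \<le> n \<and> coeff p 0 = 0 \<and> (\<forall>k<n. fps_nth (Gf p (x k)) n = 0)"
proof -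
  define T where "T = smult ((-1) ^ n / fact n) (\<Prod>k<n. [:- x k, 1:])"
  have dP: "degree (\<Prod>k<n. [:- x k, 1:]) = n"
    by (subst degree_prod_eq_sum_degree) auto
  have lP: "lead_coeff (\<Prod>k<n. [:- x k, 1:]) = 1"
    by (simp add: lead_coeff_prod)
  have dT: "degree T \<le> n" using dP by (simp add: T_def)
  have cTn: "coeff T n = (-1) ^ n / fact n" using dP lP by (simp add: T_def)
  define a where "a = (\<lambda>i. if i \<le> n then coeff T (n - i) * fact (n - i) * (-1) ^ (n - i) else (0::complex))"
  define A0 where "A0 = Abs_fps a"
  have a0: "fps_nth A0 0 = 1" using cTn by (simp add: A0_def a_def)
  define Q where "Q = fps_deriv A0 * inverse A0"
  have dA0: "fps_deriv A0 = A0 * Q"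
  proof -
    have "inverse A0 * A0 = 1" using a0 by (intro inverse_mult_eq_1) simp
    thus ?thesis by (simp add: Q_def mult.commute mult.left_commute)
  qed
  define p where "p = (\<Sum>k\<in>{1..n}. monom (fps_nth Q (k - 1) / of_nat k) k)"
  have cp: "coeff p k = (if 1 \<le> k \<and> k \<le> n then fps_nth Q (k - 1) / of_nat k else 0)" for k
    by (simp add: p_def coeff_sum)
  have p0: "coeff p 0 = 0" by (simp add: cp)
  have dp: "degree p \<le> n"
    unfolding p_def by (rule degree_sum_le) (auto intro: order.trans[OF degree_monom_le])
  have cpd: "coeff (pderiv p) k = fps_nth Q k" if "k < n" for k
    using that by (simp add: coeff_pderiv cp del: of_nat_Suc)
  have E: "fps_nth (Ef p) i = a i" if "i \<le> n" for i
  proof -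
    have "\<forall>j\<le>i. i \<le> n \<longrightarrow> fps_nth (Ef p) j = fps_nth A0 j"
      by (rule fps_ode_unique[OF Ef_deriv[OF p0] dA0]) (use a0 Ef0[OF p0] cpd in auto)
    thus ?thesis using that by (simp add: A0_def)
  qed
  have hT: "hpoly n p = T"
  proof (rule poly_eqI)
    fix k
    show "coeff (hpoly n p) k = coeff T k"
    proof (cases "k \<le> n")
      case True
      then show ?thesis by (simp add: coeff_hpoly E a_def)
    next
      case False
      then show ?thesis using dT by (simp add: coeff_hpoly coeff_eq_0)
    qed
  qed
  have "fps_nth (Gf p (x k)) n = 0" if "k < n" for k
  proof -
    have "poly T (x k) = 0" using that by (auto simp: T_def poly_prod)
    thus ?thesis using hT poly_hpoly[of n p "x k"] by simp
  qed
  thus ?thesis using dp p0 by blast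
qed



lemma det_inv:
  fixes A :: "complex mat"
  assumes A: "A \<in> carrier_mat n n" and d: "det A \<noteq> 0"
  shows "\<exists>B. B \<in> carrier_mat n n \<and> A * B = 1\<^sub>m n \<and> B * A = 1\<^sub>m n"
proof -
  have "A \<in> Units (ring_mat TYPE(complex) n ())" by (rule det_non_zero_imp_unit[OF A d])
  thus ?thesis unfolding Units_def by (auto simp: ring_mat_simps)
qed

lemma Wm_det:
  assumes p0: "coeff p 0 = 0" and inj: "inj_on x {..<n}"
  shows "det (Wm n p x) \<noteq> 0"
proof
  assume "det (Wm n p x) = 0"
  then obtain v where v: "v \<in> carrier_vec n" "v \<noteq> 0\<^sub>v n" "Wm n p x *\<^sub>v v = 0\<^sub>v n"
    using det_0_iff_vec_prod_zero[OF Wm_carrier] by blast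
  have ex: "\<exists>j<n. v $ j \<noteq> 0"
  proof (rule ccontr)
    assume "\<not> ?thesis"
    hence "v = 0\<^sub>v n" using v(1) by (intro eq_vecI) auto
    with v(2) show False by simp
  qed
  then have n: "0 < n" by auto
  define R where "R = (\<Sum>j<n. smult (v $ j) (hpoly j p))"
  have pR: "poly R (x k) = 0" if k: "k < n" for k
  proof -
    have "poly R (x k) = (\<Sum>j<n. v $ j * fps_nth (Gf p (x k)) j)"
      by (simp add: R_def poly_sum poly_hpoly)
    also have "\<dots> = (Wm n p x *\<^sub>v v) $ k"
      using k v(1) by (simp add: Wm_def scalar_prod_def atLeast0LessThan mult.commute)
    also have "\<dots> = 0" using v(3) k by simp
    finally show ?thesis .
  qed
  have dR: "degree R \<le> n - 1"
    unfolding R_def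
  proof (rule degree_sum_le)
    fix j assume "j \<in> {..<n}"
    hence "j \<le> n - 1" by auto
    thus "degree (smult (v $ j) (hpoly j p)) \<le> n - 1"
      using degree_smult_le[of "v $ j" "hpoly j p"] degree_hpoly[of j p] by linarith
  qed simp
  have R0: "R = 0"
  proof (rule poly_eqI_degree[of "x ` {..<n}"])
    show "card (x ` {..<n}) > degree R" using dR n card_img[OF inj] by simp
    show "card (x ` {..<n}) > degree (0::complex poly)" using n card_img[OF inj] by simp
  qed (use pR in auto)
  define j0 where "j0 = Max {j. j < n \<and> v $ j \<noteq> 0}"
  have fin: "finite {j. j < n \<and> v $ j \<noteq> 0}" by simp
  have j0: "j0 < n" "v $ j0 \<noteq> 0" using Max_in[OF fin] ex unfolding j0_def by auto
  have j0max: "v $ j = 0" if "j < n" "j0 < j" for j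
    using Max_ge[OF fin, of j] that unfolding j0_def by fastforce
  have "coeff R j0 = (\<Sum>j<n. v $ j * coeff (hpoly j p) j0)"
    by (simp add: R_def coeff_sum)
  also have "\<dots> = (\<Sum>j<n. if j = j0 then v $ j0 * ((-1) ^ j0 / fact j0) else 0)"
  proof (rule sum.cong[OF refl])
    fix j assume j: "j \<in> {..<n}"
    show "v $ j * coeff (hpoly j p) j0 = (if j = j0 then v $ j0 * ((-1) ^ j0 / fact j0) else 0)"
    proof (cases "j0 < j")
      case True then show ?thesis using j0max j by auto
    next
      case False
      then show ?thesis by (auto simp: coeff_hpoly Ef0[OF p0])
    qed
  qed
  also have "\<dots> = v $ j0 * ((-1) ^ j0 / fact j0)" using j0 by simp
  finally have "coeff R j0 \<noteq> 0" using j0 by simp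
  with R0 show False by simp
qed

lemma lagrange:
  fixes x d :: "nat \<Rightarrow> complex"
  assumes inj: "inj_on x {..<n}"
  shows "\<exists>r. (\<forall>k\<ge>n. coeff r k = 0) \<and> (\<forall>k<n. poly r (x k) = d k)"
proof -
  define den where "den i = (\<Prod>j\<in>{..<n}-{i}. (x i - x j))" for i
  define r where "r = (\<Sum>i<n. smult (d i / den i) (\<Prod>j\<in>{..<n}-{i}. [:- x j, 1:]))"
  have den: "den i \<noteq> 0" if "i < n" for i
    using inj that unfolding den_def by (auto simp: inj_on_def)
  have pr: "poly r (x k) = d k" if k: "k < n" for k
  proof -
    have "poly r (x k) = (\<Sum>i<n. d i / den i * (\<Prod>j\<in>{..<n}-{i}. (x k - x j)))"
      by (simp add: r_def poly_sum poly_prod)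
    also have "\<dots> = (\<Sum>i<n. if i = k then d k else 0)"
    proof (rule sum.cong[OF refl])
      fix i assume i: "i \<in> {..<n}"
      show "d i / den i * (\<Prod>j\<in>{..<n}-{i}. (x k - x j)) = (if i = k then d k else 0)"
      proof (cases "i = k")
        case True then show ?thesis using den[OF k] by (simp add: den_def)
      next
        case False
        hence "(\<Prod>j\<in>{..<n}-{i}. (x k - x j)) = 0" using k
          by (intro prod_zero) auto
        then show ?thesis using False by simp
      qed
    qed
    also have "\<dots> = d k" using k by simp
    finally show ?thesis .
  qed
  have dr: "degree r \<le> n - 1"
    unfolding r_def
  proof (rule degree_sum_le)
    fix i assume i: "i \<in> {..<n}"
    have "degree (\<Prod>j\<in>{..<n}-{i}. [:- x j, 1:]) \<le> (\<Sum>j\<in>{..<n}-{i}. degree [:- x j, 1:])"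
      using degree_prod_sum_le[of "{..<n}-{i}" "\<lambda>j. [:- x j, 1:]"] by (simp add: o_def)
    also have "\<dots> = card ({..<n}-{i})" by simp
    also have "\<dots> = n - 1" using i by simp
    finally show "degree (smult (d i / den i) (\<Prod>j\<in>{..<n}-{i}. [:- x j, 1:])) \<le> n - 1"
      using degree_smult_le order.trans by blast
  qed simp
  have "coeff r k = 0" if "n \<le> k" for k
  proof (cases "n = 0")
    case True then show ?thesis by (simp add: r_def)
  next
    case False
    then show ?thesis using dr that by (intro coeff_eq_0) linarith
  qed
  thus ?thesis using pr by blast
qed

lemma integ:
  assumes r: "\<And>k. n \<le> k \<Longrightarrow> coeff r k = 0"
  shows "\<exists>q. degree q \<le> n \<and> coeff q 0 = 0 \<and> pderiv q = (r :: complex poly)"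
proof -
  define q where "q = (\<Sum>k<n. monom (coeff r k / of_nat (Suc k)) (Suc k))"
  have cq: "coeff q (Suc m) = (if m < n then coeff r m / of_nat (Suc m) else 0)" for m
  proof -
    have "coeff q (Suc m) = (\<Sum>k<n. if k = m then coeff r k / of_nat (Suc k) else 0)"
      by (simp add: q_def coeff_sum)
    thus ?thesis by simp
  qed
  have q0: "coeff q 0 = 0" by (simp add: q_def coeff_sum)
  have dq: "degree q \<le> n"
    unfolding q_def by (rule degree_sum_le) (auto intro: order.trans[OF degree_monom_le])
  have "pderiv q = r"
  proof (rule poly_eqI)
    fix k
    show "coeff (pderiv q) k = coeff r k"
      using r[of k] by (auto simp: coeff_pderiv cq simp del: of_nat_Suc)
  qed
  thus ?thesis using q0 dq by blast
qed





lemma massoc: "dim_col A = dim_row B \<Longrightarrow> dim_col B = dim_row C \<Longrightarrow> A * B * C = A * (B * (C::complex mat))"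
  by (rule assoc_mult_mat[of A "dim_row A" "dim_col A" B "dim_col B" C "dim_col C"]) auto

lemma mdistl: "dim_col A = dim_row B \<Longrightarrow> dim_row B = dim_row C \<Longrightarrow> dim_col B = dim_col C \<Longrightarrow> A * (B + C) = A * B + A * (C::complex mat)"
  by (rule mult_add_distrib_mat[of A "dim_row A" "dim_col A" B "dim_col B"]) auto

lemma mdistr: "dim_col B = dim_row A \<Longrightarrow> dim_row B = dim_row C \<Longrightarrow> dim_col B = dim_col C \<Longrightarrow> (B + C) * A = B * A + C * (A::complex mat)"
  by (rule add_mult_distrib_mat[of B "dim_row B" "dim_col B" C A "dim_col A"]) auto

lemma mdistl_minus: "dim_col A = dim_row B \<Longrightarrow> dim_row B = dim_row C \<Longrightarrow> dim_col B = dim_col C \<Longrightarrow> A * (B - C) = A * B - A * (C::complex mat)"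
  by (rule mult_minus_distrib_mat[of A "dim_row A" "dim_col A" B "dim_col B"]) auto

lemma mdistr_minus: "dim_col B = dim_row A \<Longrightarrow> dim_row B = dim_row C \<Longrightarrow> dim_col B = dim_col C \<Longrightarrow> (B - C) * A = B * A - C * (A::complex mat)"
  by (rule minus_mult_distrib_mat[of B "dim_row B" "dim_col B" C A "dim_col A"]) auto

lemma mcancel: "Q * P = 1\<^sub>m n \<Longrightarrow> dim_col Q = dim_row P \<Longrightarrow> dim_col P = dim_row Z \<Longrightarrow> Q * (P * Z) = (Z::complex mat)"
proof -
  assume a: "Q * P = 1\<^sub>m n" "dim_col Q = dim_row P" "dim_col P = dim_row Z"
  have "Q * (P * Z) = (Q * P) * Z" using massoc[of Q P Z] a(2,3) by simp
  also have "\<dots> = 1\<^sub>m n * Z" using a(1) by simp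
  also have "dim_col P = n" using arg_cong[OF a(1), of dim_col] by simp
  hence "1\<^sub>m n * Z = Z" using a(3) by simp
  finally show ?thesis .
qed

lemmas malg = massoc mdistl mdistr mdistl_minus mdistr_minus

lemma comm_conj:
  fixes X Y P Q D :: "complex mat"
  assumes c: "X \<in> carrier_mat n n" "Y \<in> carrier_mat n n" "P \<in> carrier_mat n n" "Q \<in> carrier_mat n n" "D \<in> carrier_mat n n"
    and PQ: "P * Q = 1\<^sub>m n" and QP: "Q * P = 1\<^sub>m n" and X: "X = P * D * Q"
  shows "Q * (X * Y - Y * X - 1\<^sub>m n) * P = D * (Q * Y * P) - (Q * Y * P) * D - 1\<^sub>m n"
  using c unfolding X by (simp add: malg mcancel[OF QP] QP)



lemma dmat_one: "dmat n (\<lambda>i. 1) = 1\<^sub>m n"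
  by (rule eq_matI) auto

lemma outer_of_rank:
  assumes M: "M \<in> carrier_mat n n" and r: "vec_space.rank n (M::complex mat) \<le> 1"
  shows "\<exists>u v. \<forall>i<n. \<forall>j<n. M $$ (i,j) = u i * v j"
proof (cases "\<forall>i<n. \<forall>j<n. M $$ (i,j) = 0")
  case True
  then show ?thesis by (intro exI[of _ "\<lambda>i. 0"]) auto
next
  case False
  then obtain a b where ab: "a < n" "b < n" "M $$ (a,b) \<noteq> 0" by auto
  show ?thesis
  proof (intro exI allI impI)
    fix i j assume ij: "i < n" "j < n"
    have "M $$ (i,j) * M $$ (a,b) = M $$ (i,b) * M $$ (a,j)"
      by (rule rank1_minor[OF M r ij(1) ab(1) ij(2) ab(2)])
    thus "M $$ (i,j) = M $$ (i,b) * (M $$ (a,j) / M $$ (a,b))"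
      using ab(3) by (simp add: field_simps)
  qed
qed

lemma mult_entry:
  assumes "C \<in> carrier_mat n n" "B \<in> carrier_mat n n" "i < n" "j < n"
  shows "(C * B) $$ (i,j) = (\<Sum>l<n. C $$ (i,l) * (B::complex mat) $$ (l,j))"
  using assms by (simp add: scalar_prod_def atLeast0LessThan)

lemma conj_outer:
  fixes A M B :: "complex mat"
  assumes c: "A \<in> carrier_mat n n" "M \<in> carrier_mat n n" "B \<in> carrier_mat n n"
    and o: "\<And>i j. i < n \<Longrightarrow> j < n \<Longrightarrow> M $$ (i,j) = u i * v j"
    and ij: "i < n" "j < n"
  shows "(A * M * B) $$ (i,j) = (\<Sum>k<n. A $$ (i,k) * u k) * (\<Sum>l<n. v l * B $$ (l,j))"
proof -
  have AM: "(A * M) $$ (i,l) = (\<Sum>k<n. A $$ (i,k) * u k) * v l" if l: "l < n" for l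
  proof -
    have "(A * M) $$ (i,l) = (\<Sum>k<n. A $$ (i,k) * (u k * v l))"
      using c ij l by (simp add: scalar_prod_def atLeast0LessThan o)
    also have "\<dots> = (\<Sum>k<n. A $$ (i,k) * u k) * v l"
      by (simp add: sum_distrib_right mult.assoc)
    finally show ?thesis .
  qed
  have "(A * M * B) $$ (i,j) = (\<Sum>l<n. (A * M) $$ (i,l) * B $$ (l,j))"
    by (rule mult_entry) (use c ij in auto)
  also have "\<dots> = (\<Sum>l<n. (\<Sum>k<n. A $$ (i,k) * u k) * (v l * B $$ (l,j)))"
    by (rule sum.cong[OF refl]) (simp add: AM mult.assoc)
  also have "\<dots> = (\<Sum>k<n. A $$ (i,k) * u k) * (\<Sum>l<n. v l * B $$ (l,j))"
    by (simp add: sum_distrib_left)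
  finally show ?thesis .
qed

lemma Psi_Phi: "Psi q (Phi p (X0 n, Y0 n)) = (Xp n p, Y0 n - poly_mat (pderiv q) (Xp n p))"
  by (simp add: Psi_def Phi_def Xp_def[symmetric])

lemma diag_left:
  assumes R: "R \<in> carrier_mat n n" "A \<in> carrier_mat n n" and d: "\<And>i j. i < n \<Longrightarrow> j < n \<Longrightarrow> i \<noteq> j \<Longrightarrow> R $$ (i,j) = 0"
    and i: "i < n"
  shows "(R * A) $$ (i,i) = R $$ (i,i) * (A::complex mat) $$ (i,i)"
proof -
  have "(R * A) $$ (i,i) = (\<Sum>k = 0..<n. R $$ (i,k) * A $$ (k,i))" using R i by (simp add: scalar_prod_def)
  also have "\<dots> = (\<Sum>k = 0..<n. if k = i then R $$ (i,i) * A $$ (i,i) else 0)"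
    by (rule sum.cong[OF refl]) (use d i in auto)
  finally show ?thesis using i by simp
qed

lemma diag_right:
  assumes R: "R \<in> carrier_mat n n" "A \<in> carrier_mat n n" and d: "\<And>i j. i < n \<Longrightarrow> j < n \<Longrightarrow> i \<noteq> j \<Longrightarrow> R $$ (i,j) = 0"
    and i: "i < n"
  shows "(A * R) $$ (i,i) = (A::complex mat) $$ (i,i) * R $$ (i,i)"
proof -
  have "(A * R) $$ (i,i) = (\<Sum>k = 0..<n. A $$ (i,k) * R $$ (k,i))" using R i by (simp add: scalar_prod_def)
  also have "\<dots> = (\<Sum>k = 0..<n. if k = i then A $$ (i,i) * R $$ (i,i) else 0)"
    by (rule sum.cong[OF refl]) (use d i in auto)
  finally show ?thesis using i by simp
qed

lemma q_unique_poly: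
  assumes d1: "degree q1 \<le> n" and d2: "degree q2 \<le> n" and c1: "coeff q1 0 = 0" and c2: "coeff q2 0 = 0"
    and inj: "inj_on x {..<n}"
    and e: "\<And>k. k < n \<Longrightarrow> poly (pderiv q1) (x k) = poly (pderiv q2) ((x k)::complex)"
  shows "q1 = q2"
proof (cases "n = 0")
  case True
  have "q1 = 0" using degree_0_id[of q1] d1 c1 True by simp
  moreover have "q2 = 0" using degree_0_id[of q2] d2 c2 True by simp
  ultimately show ?thesis by simp
next
  case False
  have dd: "degree (pderiv q) < n" if "degree q \<le> n" for q :: "complex poly"
    using that False degree_pderiv[of q] by linarith
  have "pderiv q1 = pderiv q2"
  proof (rule poly_eqI_degree[of "x ` {..<n}"])
    show "card (x ` {..<n}) > degree (pderiv q1)" "card (x ` {..<n}) > degree (pderiv q2)"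
      using card_img[OF inj] dd d1 d2 by auto
  qed (use e in auto)
  hence "coeff (pderiv q1) k = coeff (pderiv q2) k" for k by simp
  hence "coeff q1 (Suc k) = coeff q2 (Suc k)" for k
    by (simp add: coeff_pderiv del: of_nat_Suc)
  note cs = this
  show ?thesis
  proof (rule poly_eqI)
    fix k show "coeff q1 k = coeff q2 k" using cs c1 c2 by (cases k) auto
  qed
qed





lemma root_from_conj:
  fixes X P Q R S :: "complex mat"
  assumes c: "X \<in> carrier_mat n n" "P \<in> carrier_mat n n" "Q \<in> carrier_mat n n" "R \<in> carrier_mat n n" "S \<in> carrier_mat n n"
    and PQ: "P * Q = 1\<^sub>m n" and QP: "Q * P = 1\<^sub>m n" and X: "X = P * dmat n x * Q"
    and RS: "R * S = 1\<^sub>m n" and SR: "S * R = 1\<^sub>m n" and XR: "X = R * Xp n p * S"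
    and p0: "coeff p 0 = 0" and k: "k < n"
  shows "fps_nth (Gf p (x k)) n = 0"
proof -
  define V where "V = Q * R"
  have V: "V \<in> carrier_mat n n" using c by (simp add: V_def)
  have Xp_eq: "Xp n p = S * X * R"
    using c unfolding XR by (simp add: malg mcancel[OF SR] SR)
  have VX: "V * Xp n p = dmat n x * V"
  proof -
    have "V * Xp n p = Q * R * (S * X * R)" by (simp add: V_def Xp_eq)
    also have "\<dots> = dmat n x * V"
      using c unfolding V_def X by (simp add: malg mcancel[OF RS] mcancel[OF QP])
    finally show ?thesis .
  qed
  have VVi: "V * (S * P) = 1\<^sub>m n"
    using c unfolding V_def by (simp add: malg mcancel[OF RS] QP)
  have eq: "(\<Sum>i<n. V $$ (k,i) * Xp n p $$ (i,j)) = x k * V $$ (k,j)" if j: "j < n" for j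
  proof -
    have "(\<Sum>i<n. V $$ (k,i) * Xp n p $$ (i,j)) = (V * Xp n p) $$ (k,j)"
      by (rule mult_entry[symmetric]) (use V k j in auto)
    also have "\<dots> = x k * V $$ (k,j)" unfolding VX using dmat_mult_left[OF V k j] .
    finally show ?thesis .
  qed
  have nz: "\<exists>j<n. V $$ (k,j) \<noteq> 0"
  proof (rule ccontr)
    assume "\<not> ?thesis"
    hence z: "\<And>j. j < n \<Longrightarrow> V $$ (k,j) = 0" by auto
    have "(V * (S * P)) $$ (k,k) = (\<Sum>l<n. V $$ (k,l) * (S * P) $$ (l,k))"
      by (rule mult_entry) (use V c k in auto)
    also have "\<dots> = 0" using z by simp
    finally show False using VVi k by simp
  qed
  then obtain j0 where "j0 < n" "V $$ (k,j0) \<noteq> 0" by auto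
  from left_eig_root[OF p0 _ eq this] k show ?thesis by simp
qed



lemma dmat_cong: "(\<And>i. i < n \<Longrightarrow> f i = g i) \<Longrightarrow> dmat n f = dmat n g"
  by (rule eq_matI) auto

lemma comm_entry:
  assumes A: "A \<in> carrier_mat n n" and ij: "i < n" "j < n"
  shows "(dmat n x * A - A * dmat n x - 1\<^sub>m n) $$ (i,j) = (x i - x j) * A $$ (i,j) - (if i = j then 1 else 0)"
proof -
  have "(dmat n x * A - A * dmat n x - 1\<^sub>m n) $$ (i,j) = (dmat n x * A) $$ (i,j) - (A * dmat n x) $$ (i,j) - (if i = j then 1 else 0)"
    using A ij by (simp del: index_mult_mat(1))
  also have "\<dots> = (x i - x j) * A $$ (i,j) - (if i = j then 1 else 0)"
    by (simp add: dmat_mult_left[OF A ij] dmat_mult_right[OF A ij] algebra_simps)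
  finally show ?thesis .
qed

lemma conj_exist:
  fixes X Y P Q :: "complex mat"
  assumes c: "X \<in> carrier_mat n n" "Y \<in> carrier_mat n n" "P \<in> carrier_mat n n" "Q \<in> carrier_mat n n"
    and PQ: "P * Q = 1\<^sub>m n" and QP: "Q * P = 1\<^sub>m n" and X: "X = P * dmat n x * Q"
    and inj: "inj_on x {..<n}"
    and ab: "\<And>i j. i < n \<Longrightarrow> j < n \<Longrightarrow> (dmat n x * (Q * Y * P) - (Q * Y * P) * dmat n x - 1\<^sub>m n) $$ (i,j) = \<alpha> i * \<beta> j"
    and p0: "coeff p 0 = 0" and roots: "\<And>k. k < n \<Longrightarrow> fps_nth (Gf p (x k)) n = 0"
  shows "\<exists>q. degree q \<le> n \<and> coeff q 0 = 0 \<and> sim_conj n (Psi q (Phi p (X0 n, Y0 n))) (X, Y)"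
proof -
  define Y1 where "Y1 = Q * Y * P"
  have Y1: "Y1 \<in> carrier_mat n n" using c by (simp add: Y1_def)
  define D where "D = dmat n x"
  have D: "D \<in> carrier_mat n n" by (simp add: D_def)
  define W where "W = Wm n p x"
  have W: "W \<in> carrier_mat n n" by (simp add: W_def)
  obtain Wi where Wi: "Wi \<in> carrier_mat n n" and WWi: "W * Wi = 1\<^sub>m n" and WiW: "Wi * W = 1\<^sub>m n"
    using det_inv[OF W Wm_det[OF p0 inj, folded W_def]] by blast
  define X' where "X' = Xp n p"
  have X': "X' \<in> carrier_mat n n" by (simp add: X'_def)
  have WX: "W * X' = D * W" unfolding W_def X'_def D_def by (rule Wm_eig[OF p0 roots])
  have X'eq: "X' = Wi * D * W"
  proof -
    have "Wi * D * W = Wi * (D * W)" by (rule massoc) (use Wi D W in auto)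
    also have "\<dots> = Wi * (W * X')" by (simp add: WX)
    also have "\<dots> = X'" by (rule mcancel[OF WiW]) (use W Wi X' in auto)
    finally show ?thesis by simp
  qed
  define Yh where "Yh = W * Y0 n * Wi"
  have Yh: "Yh \<in> carrier_mat n n" unfolding Yh_def by (rule mult_carrier_mat[OF mult_carrier_mat[OF W Y0_carrier] Wi])
  have M0: "D * Yh - Yh * D - 1\<^sub>m n = W * (X' * Y0 n - Y0 n * X' - 1\<^sub>m n) * Wi"
    unfolding Yh_def by (rule comm_conj[OF X' Y0_carrier Wi W D WiW WWi X'eq, symmetric])
  define u0 where "u0 i = (if i = n - 1 then - of_nat n else (0::complex))" for i
  define v0 where "v0 j = (if j = n - 1 then 1 else (0::complex))" for j
  have o0: "(X' * Y0 n - Y0 n * X' - 1\<^sub>m n) $$ (i,j) = u0 i * v0 j" if "i < n" "j < n" for i j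
    using Xp_comm[OF that, of p] unfolding X'_def u0_def v0_def by simp
  define \<gamma> where "\<gamma> i = (\<Sum>k<n. W $$ (i,k) * u0 k)" for i
  define \<delta> where "\<delta> j = (\<Sum>l<n. v0 l * Wi $$ (l,j))" for j
  have gd: "(D * Yh - Yh * D - 1\<^sub>m n) $$ (i,j) = \<gamma> i * \<delta> j" if ij: "i < n" "j < n" for i j
    unfolding M0 \<gamma>_def \<delta>_def
    by (rule conj_outer[OF W _ Wi o0 ij]) (use X' in auto)
  have eY1: "(x i - x j) * Y1 $$ (i,j) - (if i = j then 1 else 0) = \<alpha> i * \<beta> j" if ij: "i < n" "j < n" for i j
    using ab[OF ij] comm_entry[OF Y1 ij, of x] unfolding Y1_def by simp
  have eYh: "(x i - x j) * Yh $$ (i,j) - (if i = j then 1 else 0) = \<gamma> i * \<delta> j" if ij: "i < n" "j < n" for i j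
    using gd[OF ij] comm_entry[OF Yh ij, of x] unfolding D_def by simp
  have ab1: "\<alpha> i * \<beta> i = -1" if "i < n" for i using eY1[OF that that] by simp
  have gd1: "\<gamma> i * \<delta> i = -1" if "i < n" for i using eYh[OF that that] by simp
  define dd where "dd i = \<gamma> i / \<alpha> i" for i
  have dd0: "dd i \<noteq> 0" if "i < n" for i
    using ab1[OF that] gd1[OF that] unfolding dd_def by auto
  define K where "K = dmat n dd"
  define Ki where "Ki = dmat n (\<lambda>i. 1 / dd i)"
  have K: "K \<in> carrier_mat n n" "Ki \<in> carrier_mat n n" by (simp_all add: K_def Ki_def)
  have KKi: "K * Ki = 1\<^sub>m n" "Ki * K = 1\<^sub>m n"
    unfolding K_def Ki_def dmat_mult dmat_one[symmetric] by (auto intro!: dmat_cong simp: dd0)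
  have DK: "D * (K * Z) = K * (D * Z)" if "dim_row Z = n" for Z
  proof -
    have "D * K = K * D" unfolding D_def K_def dmat_mult by (simp add: mult.commute)
    hence "D * K * Z = K * D * Z" by simp
    thus ?thesis using that D K by (simp add: massoc)
  qed
  define Z where "Z = K * Y1 * Ki"
  have Z: "Z \<in> carrier_mat n n" unfolding Z_def by (rule mult_carrier_mat[OF mult_carrier_mat[OF K(1) Y1] K(2)])
  have Zij: "Z $$ (i,j) = dd i * Y1 $$ (i,j) * (1 / dd j)" if ij: "i < n" "j < n" for i j
  proof -
    have "Z $$ (i,j) = (K * Y1) $$ (i,j) * (1 / dd j)"
      unfolding Z_def Ki_def using K Y1 ij by (intro dmat_mult_right) auto
    also have "(K * Y1) $$ (i,j) = dd i * Y1 $$ (i,j)"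
      unfolding K_def by (rule dmat_mult_left[OF Y1 ij])
    finally show ?thesis .
  qed
  define e where "e i = Yh $$ (i,i) - Y1 $$ (i,i)" for i
  have Zeq: "Yh - dmat n e = Z"
  proof (rule eq_matI)
    fix i j assume "i < dim_row Z" "j < dim_col Z"
    hence ij: "i < n" "j < n" using Z by auto
    show "(Yh - dmat n e) $$ (i,j) = Z $$ (i,j)"
    proof (cases "i = j")
      case True
      then show ?thesis using ij Yh dd0[OF ij(1)] by (simp add: Zij e_def)
    next
      case False
      have xne: "x i - x j \<noteq> 0" using inj False ij by (auto simp: inj_on_def)
      have a: "(x i - x j) * Y1 $$ (i,j) = \<alpha> i * \<beta> j" using eY1[OF ij] False by simp
      have g: "(x i - x j) * Yh $$ (i,j) = \<gamma> i * \<delta> j" using eYh[OF ij] False by simp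
      have "(x i - x j) * Z $$ (i,j) = dd i * ((x i - x j) * Y1 $$ (i,j)) * (1 / dd j)"
        by (simp add: Zij ij)
      also have "\<dots> = dd i * (\<alpha> i * \<beta> j) * (1 / dd j)" by (simp add: a)
      also have "\<dots> = \<gamma> i * \<delta> j"
        using ab1[OF ij(1)] ab1[OF ij(2)] gd1[OF ij(1)] gd1[OF ij(2)] dd0[OF ij(1)] dd0[OF ij(2)]
        unfolding dd_def by (auto simp: field_simps)
      finally have "(x i - x j) * Z $$ (i,j) = (x i - x j) * Yh $$ (i,j)" using g by simp
      hence "Z $$ (i,j) = Yh $$ (i,j)" using xne by simp
      then show ?thesis using ij Yh False by simp
    qed
  qed (use Yh Z in auto)
  obtain r where r: "\<And>k. n \<le> k \<Longrightarrow> coeff r k = 0" "\<And>k. k < n \<Longrightarrow> poly r (x k) = e k"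
    using lagrange[OF inj, of e] by blast
  obtain q where q: "degree q \<le> n" "coeff q 0 = 0" "pderiv q = r"
    using integ[OF r(1)] by blast
  have PM: "poly_mat r X' = Wi * dmat n e * W"
  proof -
    have "poly_mat r X' = Wi * poly_mat r D * W"
      unfolding X'eq by (rule poly_mat_conj[OF D Wi W WiW WWi])
    also have "poly_mat r D = dmat n e"
      unfolding D_def poly_mat_dmat by (rule dmat_cong) (simp add: r(2))
    finally show ?thesis .
  qed
  have Y0eq: "Y0 n = Wi * Yh * W"
    using W Wi unfolding Yh_def by (simp add: malg mcancel[OF WiW] WiW)
  have ZZ: "Y0 n - poly_mat r X' = Wi * Z * W"
  proof -
    have "Wi * Z * W = Wi * (Yh - dmat n e) * W" by (simp add: Zeq)
    also have "\<dots> = Wi * Yh * W - Wi * dmat n e * W" using Wi W Yh by (simp add: malg)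
    finally show ?thesis using PM Y0eq by simp
  qed
  define R where "R = P * Ki * W"
  define S where "S = Wi * K * Q"
  have RS: "R * S = 1\<^sub>m n"
    unfolding R_def S_def using c K W Wi by (simp add: malg mcancel[OF WWi] mcancel[OF KKi(2)] PQ)
  have SR: "S * R = 1\<^sub>m n"
    unfolding R_def S_def using c K W Wi by (simp add: malg mcancel[OF QP] mcancel[OF KKi(1)] WiW)
  have RX: "X = R * X' * S"
  proof -
    have "R * X' * S = P * (Ki * (D * (K * Q)))"
      unfolding R_def S_def X'eq using c K W Wi D by (simp add: malg mcancel[OF WWi])
    also have "\<dots> = P * (D * Q)" using c K D by (simp add: DK mcancel[OF KKi(2)])
    also have "\<dots> = X" unfolding X D_def using c by (simp add: malg)
    finally show ?thesis by simp
  qed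
  have RY: "Y = R * (Y0 n - poly_mat (pderiv q) X') * S"
  proof -
    have "R * (Y0 n - poly_mat (pderiv q) X') * S = R * (Wi * Z * W) * S" using ZZ q(3) by simp
    also have "\<dots> = Y"
      unfolding R_def S_def Z_def Y1_def using c K W Wi
      by (simp add: malg mcancel[OF WWi] mcancel[OF KKi(2)] mcancel[OF KKi(1)] mcancel[OF PQ] PQ)
    finally show ?thesis by simp
  qed
  have "sim_conj n (Psi q (Phi p (X0 n, Y0 n))) (X, Y)"
    unfolding sim_conj_def Psi_Phi fst_conv snd_conv X'_def[symmetric]
    by (rule exI[of _ R], rule exI[of _ S]) (use RS SR RX RY c K W Wi in \<open>auto simp: R_def S_def\<close>)
  thus ?thesis using q by blast
qed




lemma W_setup:
  assumes p0: "coeff p 0 = 0" and roots: "\<And>k. k < n \<Longrightarrow> fps_nth (Gf p (x k)) n = 0"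
    and inj: "inj_on x {..<n}"
  shows "\<exists>Wi. Wi \<in> carrier_mat n n \<and> Wm n p x * Wi = 1\<^sub>m n \<and> Wi * Wm n p x = 1\<^sub>m n
             \<and> Xp n p = Wi * dmat n x * Wm n p x"
proof -
  define W where "W = Wm n p x"
  have W: "W \<in> carrier_mat n n" by (simp add: W_def)
  obtain Wi where Wi: "Wi \<in> carrier_mat n n" and WWi: "W * Wi = 1\<^sub>m n" and WiW: "Wi * W = 1\<^sub>m n"
    using det_inv[OF W Wm_det[OF p0 inj, folded W_def]] by blast
  define X' where "X' = Xp n p"
  have X': "X' \<in> carrier_mat n n" by (simp add: X'_def)
  have WX: "W * X' = dmat n x * W" unfolding W_def X'_def by (rule Wm_eig[OF p0 roots])
  have X'eq: "X' = Wi * dmat n x * W"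
  proof -
    have "Wi * dmat n x * W = Wi * (dmat n x * W)" by (rule massoc) (use Wi W in auto)
    also have "\<dots> = Wi * (W * X')" by (simp add: WX)
    also have "\<dots> = X'" by (rule mcancel[OF WiW]) (use W Wi X' in auto)
    finally show ?thesis by simp
  qed
  show ?thesis using Wi WWi WiW X'eq unfolding W_def X'_def by blast
qed

lemma q_from_conj:
  fixes R1 S1 R2 S2 X Y :: "complex mat"
  assumes c: "X \<in> carrier_mat n n" "Y \<in> carrier_mat n n"
    "R1 \<in> carrier_mat n n" "S1 \<in> carrier_mat n n" "R2 \<in> carrier_mat n n" "S2 \<in> carrier_mat n n"
    and inj: "inj_on x {..<n}" and p0: "coeff p 0 = 0" and roots: "\<And>k. k < n \<Longrightarrow> fps_nth (Gf p (x k)) n = 0"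
    and RS1: "R1 * S1 = 1\<^sub>m n" "S1 * R1 = 1\<^sub>m n" and RS2: "R2 * S2 = 1\<^sub>m n" "S2 * R2 = 1\<^sub>m n"
    and X1: "X = R1 * Xp n p * S1" and Y1: "Y = R1 * (Y0 n - poly_mat (pderiv q1) (Xp n p)) * S1"
    and X2: "X = R2 * Xp n p * S2" and Y2: "Y = R2 * (Y0 n - poly_mat (pderiv q2) (Xp n p)) * S2"
    and d: "degree q1 \<le> n" "degree q2 \<le> n" "coeff q1 0 = 0" "coeff q2 0 = 0"
  shows "q1 = q2"
proof -
  obtain Wi where Wi: "Wi \<in> carrier_mat n n" and WWi: "Wm n p x * Wi = 1\<^sub>m n" and WiW: "Wi * Wm n p x = 1\<^sub>m n"
    and X'eq: "Xp n p = Wi * dmat n x * Wm n p x"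
    using W_setup[OF p0 roots inj] by blast
  define W where "W = Wm n p x"
  have W: "W \<in> carrier_mat n n" by (simp add: W_def)
  note WWi = WWi[folded W_def] and WiW = WiW[folded W_def] and X'eq = X'eq[folded W_def]
  define X' where "X' = Xp n p"
  have X': "X' \<in> carrier_mat n n" by (simp add: X'_def)
  note X'eq = X'eq[folded X'_def] and X1 = X1[folded X'_def] and X2 = X2[folded X'_def]
    and Y1 = Y1[folded X'_def] and Y2 = Y2[folded X'_def]
  define D where "D = dmat n x"
  have D: "D \<in> carrier_mat n n" by (simp add: D_def)
  have Deq: "D = W * X' * Wi"
    unfolding X'eq D_def using W Wi by (simp add: malg mcancel[OF WWi] WWi)
  define Z1 where "Z1 = Y0 n - poly_mat (pderiv q1) X'"
  define Z2 where "Z2 = Y0 n - poly_mat (pderiv q2) X'"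
  have Z: "Z1 \<in> carrier_mat n n" "Z2 \<in> carrier_mat n n"
    unfolding Z1_def Z2_def by (rule minus_carrier_mat[OF poly_mat_carrier[OF X']])+
  define T where "T = S2 * R1"
  define Ti where "Ti = S1 * R2"
  have T: "T \<in> carrier_mat n n" "Ti \<in> carrier_mat n n" unfolding T_def Ti_def using c by auto
  have TTi: "T * Ti = 1\<^sub>m n" unfolding T_def Ti_def using c by (simp add: malg mcancel[OF RS1(1)] RS2(2))
  have TX: "T * X' = X' * T"
  proof -
    have "S2 * X * R1 = T * X'" unfolding X1 T_def using c X' by (simp add: malg RS1(2))
    moreover have "S2 * X * R1 = X' * T" unfolding X2 T_def using c X' by (simp add: malg mcancel[OF RS2(2)])
    ultimately show ?thesis by simp
  qed
  have TZ: "T * Z1 = Z2 * T"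
  proof -
    have "S2 * Y * R1 = T * Z1" unfolding Y1 Z1_def[symmetric] T_def using c Z by (simp add: malg RS1(2))
    moreover have "S2 * Y * R1 = Z2 * T" unfolding Y2 Z2_def[symmetric] T_def using c Z by (simp add: malg mcancel[OF RS2(2)])
    ultimately show ?thesis by simp
  qed
  have TX': "T * (X' * Z) = X' * (T * Z)" if "dim_row Z = n" for Z
    using that T X' TX by (metis massoc carrier_matD)
  have TZ': "T * (Z1 * Z) = Z2 * (T * Z)" if "dim_row Z = n" for Z
    using that T Z TZ by (metis massoc carrier_matD)
  define Rm where "Rm = W * T * Wi"
  define Rmi where "Rmi = W * Ti * Wi"
  have Rm: "Rm \<in> carrier_mat n n" "Rmi \<in> carrier_mat n n" unfolding Rm_def Rmi_def using W T Wi by auto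
  have RR: "Rm * Rmi = 1\<^sub>m n"
    unfolding Rm_def Rmi_def using W T Wi by (simp add: malg mcancel[OF WiW] mcancel[OF TTi] WWi)
  have RD: "Rm * D = D * Rm"
    unfolding Rm_def Deq using W T Wi X' by (simp add: malg mcancel[OF WiW] TX')
  have Rdiag: "Rm $$ (i,j) = 0" if ij: "i < n" "j < n" "i \<noteq> j" for i j
  proof -
    have "Rm $$ (i,j) * x j = x i * Rm $$ (i,j)"
      using arg_cong[OF RD, of "\<lambda>A. A $$ (i,j)"] dmat_mult_left[OF Rm(1) ij(1,2)] dmat_mult_right[OF Rm(1) ij(1,2)]
      unfolding D_def by simp
    hence "(x i - x j) * Rm $$ (i,j) = 0" by (auto simp: algebra_simps)
    moreover have "x i \<noteq> x j" using inj ij by (auto simp: inj_on_def)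
    ultimately show ?thesis by simp
  qed
  have Rnz: "Rm $$ (i,i) \<noteq> 0" if i: "i < n" for i
  proof -
    have "(Rm * Rmi) $$ (i,i) = Rm $$ (i,i) * Rmi $$ (i,i)" by (rule diag_left[OF Rm Rdiag i])
    thus ?thesis using RR i by auto
  qed
  define Yh where "Yh = W * Y0 n * Wi"
  have Zh: "W * Za * Wi = Yh - dmat n (\<lambda>k. poly (pderiv qa) (x k))"
    if Za: "Za = Y0 n - poly_mat (pderiv qa) X'" for Za qa
  proof -
    have pm: "poly_mat (pderiv qa) X' = Wi * dmat n (\<lambda>k. poly (pderiv qa) (x k)) * W"
      unfolding X'eq poly_mat_conj[OF dmat_carrier Wi W WiW WWi] poly_mat_dmat ..
    show ?thesis unfolding Za pm Yh_def using W Wi by (simp add: malg mcancel[OF WWi] WWi)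
  qed
  have RZ: "Rm * (W * Z1 * Wi) = (W * Z2 * Wi) * Rm"
    unfolding Rm_def using W T Wi Z by (simp add: malg mcancel[OF WiW] TZ')
  have "poly (pderiv q1) (x k) = poly (pderiv q2) (x k)" if k: "k < n" for k
  proof -
    let ?A1 = "W * Z1 * Wi" and ?A2 = "W * Z2 * Wi"
    have A: "?A1 \<in> carrier_mat n n" "?A2 \<in> carrier_mat n n" using W Wi Z by auto
    have "Rm $$ (k,k) * ?A1 $$ (k,k) = ?A2 $$ (k,k) * Rm $$ (k,k)"
      using arg_cong[OF RZ, of "\<lambda>A. A $$ (k,k)"] diag_left[OF Rm(1) A(1) Rdiag k] diag_right[OF Rm(1) A(2) Rdiag k]
      by simp
    hence "?A1 $$ (k,k) = ?A2 $$ (k,k)" using Rnz[OF k] by (simp add: mult.commute)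
    moreover have "Yh \<in> carrier_mat n n" unfolding Yh_def using W Wi by auto
    ultimately show ?thesis using Zh[OF Z1_def] Zh[OF Z2_def] k by simp
  qed
  thus ?thesis by (rule q_unique_poly[OF d inj])
qed



theorem lemma10p2:
  fixes n :: nat and X Y :: "complex mat"
  assumes "X \<in> carrier_mat n n" and "Y \<in> carrier_mat n n"
    and "vec_space.rank n (X * Y - Y * X - 1\<^sub>m n) \<le> 1"
    and "diagonalizable X"
  shows "\<exists>!pq :: complex poly \<times> complex poly.
           degree (fst pq) \<le> n \<and> degree (snd pq) \<le> n \<and>
           poly (fst pq) 0 = 0 \<and> poly (snd pq) 0 = 0 \<and>
           sim_conj n (Psi (snd pq) (Phi (fst pq) (X0 n, Y0 n))) (X, Y)"
proof -
  note Xc = assms(1) and Yc = assms(2)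
  obtain D0 P Q where dg: "diagonal_mat D0" and wit: "similar_mat_wit X D0 P Q"
    using assms(4) unfolding diagonalizable_def similar_mat_def by blast
  note w = similar_mat_witD2[OF Xc wit]
  have PQ: "P * Q = 1\<^sub>m n" and QP: "Q * P = 1\<^sub>m n" and XD: "X = P * D0 * Q"
    and D0c: "D0 \<in> carrier_mat n n" and Pc: "P \<in> carrier_mat n n" and Qc: "Q \<in> carrier_mat n n"
    using w by auto
  define x where "x i = D0 $$ (i,i)" for i
  have D0x: "D0 = dmat n x"
  proof (rule eq_matI)
    fix i j assume "i < dim_row (dmat n x)" "j < dim_col (dmat n x)"
    thus "D0 $$ (i,j) = dmat n x $$ (i,j)" using dg D0c unfolding diagonal_mat_def x_def by auto
  qed (use D0c in auto)
  have X: "X = P * dmat n x * Q" using XD D0x by simp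
  define M where "M = X * Y - Y * X - 1\<^sub>m n"
  have Mc: "M \<in> carrier_mat n n" unfolding M_def using Xc Yc by auto
  obtain u v where uv: "\<And>i j. i < n \<Longrightarrow> j < n \<Longrightarrow> M $$ (i,j) = u i * v j"
    using outer_of_rank[OF Mc assms(3)[folded M_def]] by blast
  have QMP: "Q * M * P = dmat n x * (Q * Y * P) - (Q * Y * P) * dmat n x - 1\<^sub>m n"
    unfolding M_def by (rule comm_conj[OF Xc Yc Pc Qc dmat_carrier PQ QP X])
  define \<alpha> where "\<alpha> i = (\<Sum>k<n. Q $$ (i,k) * u k)" for i
  define \<beta> where "\<beta> j = (\<Sum>l<n. v l * P $$ (l,j))" for j
  have ab: "(dmat n x * (Q * Y * P) - (Q * Y * P) * dmat n x - 1\<^sub>m n) $$ (i,j) = \<alpha> i * \<beta> j"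
    if ij: "i < n" "j < n" for i j
    unfolding QMP[symmetric] \<alpha>_def \<beta>_def by (rule conj_outer[OF Qc Mc Pc uv ij])
  have Y1c: "Q * Y * P \<in> carrier_mat n n" using Qc Yc Pc by auto
  have eY1: "(x i - x j) * (Q * Y * P) $$ (i,j) - (if i = j then 1 else 0) = \<alpha> i * \<beta> j" if ij: "i < n" "j < n" for i j
    using ab[OF ij] comm_entry[OF Y1c ij, of x] by simp
  have inj: "inj_on x {..<n}"
  proof (rule inj_onI, rule ccontr)
    fix i j assume i: "i \<in> {..<n}" and j: "j \<in> {..<n}" and xe: "x i = x j" and ne: "i \<noteq> j"
    have z: "\<alpha> i * \<beta> j = 0" using eY1[of i j] i j xe ne by simp
    have a1: "\<alpha> i * \<beta> i = -1" using eY1[of i i] i by simp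
    have a2: "\<alpha> j * \<beta> j = -1" using eY1[of j j] j by simp
    have "\<alpha> i \<noteq> 0" using a1 by auto
    moreover have "\<beta> j \<noteq> 0" using a2 by auto
    ultimately show False using z by simp
  qed
  obtain p where p: "degree p \<le> n" "coeff p 0 = 0" "\<And>k. k < n \<Longrightarrow> fps_nth (Gf p (x k)) n = 0"
    using p_exists[of n x] by blast
  obtain q where q: "degree q \<le> n" "coeff q 0 = 0" and sc: "sim_conj n (Psi q (Phi p (X0 n, Y0 n))) (X, Y)"
    using conj_exist[OF Xc Yc Pc Qc PQ QP X inj ab p(2) p(3)] by blast
  obtain R1 S1 where R1: "R1 \<in> carrier_mat n n" "S1 \<in> carrier_mat n n" "R1 * S1 = 1\<^sub>m n" "S1 * R1 = 1\<^sub>m n"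
    "X = R1 * Xp n p * S1" "Y = R1 * (Y0 n - poly_mat (pderiv q) (Xp n p)) * S1"
    using sc unfolding sim_conj_def Psi_Phi by auto
  show ?thesis
  proof (rule ex1I[of _ "(p, q)"])
    show "degree (fst (p, q)) \<le> n \<and> degree (snd (p, q)) \<le> n \<and> poly (fst (p, q)) 0 = 0 \<and> poly (snd (p, q)) 0 = 0 \<and>
       sim_conj n (Psi (snd (p, q)) (Phi (fst (p, q)) (X0 n, Y0 n))) (X, Y)"
      using p q sc by (simp add: poly_0_coeff_0)
  next
    fix pq :: "complex poly \<times> complex poly"
    assume a: "degree (fst pq) \<le> n \<and> degree (snd pq) \<le> n \<and> poly (fst pq) 0 = 0 \<and> poly (snd pq) 0 = 0 \<and>
       sim_conj n (Psi (snd pq) (Phi (fst pq) (X0 n, Y0 n))) (X, Y)"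
    obtain p' q' where pq: "pq = (p', q')" by (cases pq)
    have p': "degree p' \<le> n" "coeff p' 0 = 0" and q': "degree q' \<le> n" "coeff q' 0 = 0"
      using a by (auto simp: pq poly_0_coeff_0)
    obtain R2 S2 where R2: "R2 \<in> carrier_mat n n" "S2 \<in> carrier_mat n n" "R2 * S2 = 1\<^sub>m n" "S2 * R2 = 1\<^sub>m n"
      "X = R2 * Xp n p' * S2" "Y = R2 * (Y0 n - poly_mat (pderiv q') (Xp n p')) * S2"
      using a unfolding pq sim_conj_def Psi_Phi by auto
    have roots': "fps_nth (Gf p' (x k)) n = 0" if "k < n" for k
      by (rule root_from_conj[OF Xc Pc Qc R2(1,2) PQ QP X R2(3,4,5) p'(2) that])
    have pp: "p' = p" by (rule p_unique[OF p'(1) p(1) p'(2) p(2) inj roots' p(3)])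
    have qq: "q = q'"
      by (rule q_from_conj[OF Xc Yc R1(1,2) R2(1,2) inj p(2) p(3) R1(3,4) R2(3,4) R1(5,6) R2(5,6)[unfolded pp] q(1) q'(1) q(2) q'(2)])
    show "pq = (p, q)" using pq pp qq by simp
  qed
qed


end
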